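(* Let $b,n\ge1$ and $1\le c\le b$ be integers and let $p_1,\dots,p_b\ge 0$ satisfy $p_1=\dots=p_c>p_{c+1}\ge\dots\ge p_b$. If $0\le k\le n(b-1)$ is such that $|\mathrm{LDS}_{\le k}|\le c^n$, then $\Pr(\mathrm{DBS}(c))\ge\Pr(\mathrm{LDS}_{\le k})$.
   Context: Search-tree model: a complete $b$-ary tree of depth $n$ whose leaves are identified with sequences $(j_1,\dots,j_n)\in\{1,\dots,b\}^n$. Given reals $p_1,\dots,p_b\ge0$, the success probability of a leaf is $\prod_{i=1}^n p_{j_i}$, and for a set $S$ of leaves, $\Pr(S)=\sum_{(j_1,\dots,j_n)\in S}\prod_{i=1}^n p_{j_i}$; $|S|$ is the number of leaves in $S$. For $1\le c\le b$, $\mathrm{DBS}(c)=\{1,\dots,c\}^n$. The discrepancy of a leaf $(j_1,\dots,j_n)$ is $\sum_{i=1}^n (j_i-1)$, and $\mathrm{LDS}_{\le k}$ is the set of leaves of discrepancy at most $k$. *)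

theory Defs
  imports "HOL-Library.FuncSet" Complex_Main
begin

text \<open>Leaves of the complete b-ary tree of depth n: sequences (j_1,...,j_n) with
  entries in {1..b}, represented as extensional functions on positions {1..n}.\<close>
definition leaves :: "nat \<Rightarrow> nat \<Rightarrow> (nat \<Rightarrow> nat) set" where
  "leaves b n = ({1..n} \<rightarrow>\<^sub>E {1..b})"

definition leaf_prob :: "(nat \<Rightarrow> real) \<Rightarrow> nat \<Rightarrow> (nat \<Rightarrow> nat) \<Rightarrow> real" where
  "leaf_prob p n j = (\<Prod>i\<in>{1..n}. p (j i))"

definition Pr :: "(nat \<Rightarrow> real) \<Rightarrow> nat \<Rightarrow> (nat \<Rightarrow> nat) set \<Rightarrow> real" where
  "Pr p n S = (\<Sum>j\<in>S. leaf_prob p n j)"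

definition DBS :: "nat \<Rightarrow> nat \<Rightarrow> (nat \<Rightarrow> nat) set" where
  "DBS c n = ({1..n} \<rightarrow>\<^sub>E {1..c})"

definition discrepancy :: "nat \<Rightarrow> (nat \<Rightarrow> nat) \<Rightarrow> nat" where
  "discrepancy n j = (\<Sum>i\<in>{1..n}. j i - 1)"

definition LDS_le :: "nat \<Rightarrow> nat \<Rightarrow> nat \<Rightarrow> (nat \<Rightarrow> nat) set" where
  "LDS_le b n k = {j \<in> leaves b n. discrepancy n j \<le> k}"

end

theory Submission
  imports Defs
begin

theorem mainTheorem3:
  fixes b n c k :: nat and p :: "nat \<Rightarrow> real"
  assumes "b \<ge> 1" and "n \<ge> 1" and "1 \<le> c" and "c \<le> b"
    and "\<And>i. 1 \<le> i \<Longrightarrow> i \<le> b \<Longrightarrow> p i \<ge> 0"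
    and "\<And>i. 1 \<le> i \<Longrightarrow> i \<le> c \<Longrightarrow> p i = p 1"
    and "c < b \<Longrightarrow> p c > p (c + 1)"
    and "\<And>i. c + 1 \<le> i \<Longrightarrow> i < b \<Longrightarrow> p i \<ge> p (i + 1)"
    and "k \<le> n * (b - 1)"
    and "card (LDS_le b n k) \<le> c ^ n"
  shows "Pr p n (DBS c n) \<ge> Pr p n (LDS_le b n k)"
proof -
  have chain: "c + 1 + m \<le> b \<Longrightarrow> p (c + 1 + m) \<le> p (c + 1)" for m
  proof (induction m)
    case 0 then show ?case by simp
  next
    case (Suc m)
    then have "p (c + 1 + m + 1) \<le> p (c + 1 + m)" using assms(8)[of "c+1+m"] by simp
    then show ?case using Suc by simp
  qed
  have le: "p i \<le> p 1" if "1 \<le> i" "i \<le> b" for i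
  proof (cases "i \<le> c")
    case True then show ?thesis using assms(6)[of i] that by linarith
  next
    case False
    define m where "m = i - (c + 1)"
    have m: "i = c + 1 + m" using False unfolding m_def by simp
    have "p i \<le> p (c+1)" using chain[of m] m that by simp
    also have "\<dots> < p c" using assms(7) False that by simp
    also have "\<dots> = p 1" using assms(6)[of c] assms(3) by linarith
    finally show ?thesis by simp
  qed
  have p1: "p 1 \<ge> 0" using assms(5)[of 1] assms(1) by simp
  have fin: "finite (leaves b n)" unfolding leaves_def by (simp add: finite_PiE)
  have finL: "finite (LDS_le b n k)" unfolding LDS_le_def using fin by simp
  have "Pr p n (LDS_le b n k) \<le> (\<Sum>j\<in>LDS_le b n k. p 1 ^ n)"
    unfolding Pr_def
  proof (rule sum_mono)
    fix j assume "j \<in> LDS_le b n k"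
    then have j: "\<And>i. i \<in> {1..n} \<Longrightarrow> j i \<in> {1..b}"
      unfolding LDS_le_def leaves_def by (auto simp: PiE_iff)
    have "leaf_prob p n j \<le> (\<Prod>i\<in>{1..n}. p 1)"
      unfolding leaf_prob_def
      by (rule prod_mono)
         (metis j assms(5) le atLeastAtMost_iff)
    then show "leaf_prob p n j \<le> p 1 ^ n" by simp
  qed
  also have "\<dots> = real (card (LDS_le b n k)) * p 1 ^ n" by simp
  also have "\<dots> \<le> real (c ^ n) * p 1 ^ n"
    using assms(10) p1 by (intro mult_right_mono) auto
  also have "\<dots> = Pr p n (DBS c n)"
  proof -
    have "Pr p n (DBS c n) = (\<Sum>j\<in>DBS c n. p 1 ^ n)"
      unfolding Pr_def
    proof (rule sum.cong[OF refl])
      fix j assume "j \<in> DBS c n"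
      then have j: "\<And>i. i \<in> {1..n} \<Longrightarrow> j i \<in> {1..c}"
        unfolding DBS_def by (auto simp: PiE_iff)
      have "leaf_prob p n j = (\<Prod>i\<in>{1..n}. p 1)"
        unfolding leaf_prob_def
        by (rule prod.cong[OF refl])
         (metis j assms(6) atLeastAtMost_iff)
      then show "leaf_prob p n j = p 1 ^ n" by simp
    qed
    also have "\<dots> = real (card (DBS c n)) * p 1 ^ n" by simp
    also have "card (DBS c n) = c ^ n" unfolding DBS_def by (simp add: card_PiE)
    finally show ?thesis by simp
  qed
  finally show ?thesis .
qed

end
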